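(* Let $X$ be a real Hilbert space, $I$ a finite index set, and $(T_i)_{i\in I}$ averaged nonexpansive, boundedly regular operators $X\to X$ with $Z_i=\operatorname{Fix}T_i$ and $Z=\bigcap_{i\in I}Z_i\neq\varnothing$. Suppose $(Z_i)_{i\in I}$ is innately boundedly regular. Let $x_0\in X$, let $r\colon\mathbb N\to I$ be a random map for $I$, and define $x_{n+1}=T_{r(n)}x_n$. Then $(x_n)_{n\in\mathbb N}$ converges strongly to some point $\bar z\in Z$. If moreover $Z$ is an affine subspace, then $\bar z=P_Zx_0$.
   Context: $T$ is averaged nonexpansive if $T=(1-\lambda)\mathrm{Id}+\lambda N$ with $\lambda\in[0,1[$ and $N$ nonexpansive. $T$ with $\operatorname{Fix}T\ne\varnothing$ is boundedly regular if every bounded sequence $(x_n)$ with $x_n-Tx_n\to0$ satisfies $d_{\operatorname{Fix}T}(x_n)\to0$. A finite family $(C_i)_{i\in I}$ of closed convex sets with $C=\bigcap_iC_i\ne\varnothing$ is boundedly regular if for every bounded sequence $(x_n)$, $\max_{i}d_{C_i}(x_n)\to0$ implies $d_C(x_n)\to0$; it is innately boundedly regular if $(C_j)_{j\in J}$ is boundedly regular for every nonempty $J\subseteq I$. A map $r\colon\mathbb N\to I$ is a random map for $I$ if $r^{-1}(i)$ is infinite for every $i\in I$. $P_Z$ is the metric projection onto $Z$. *)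

theory Defs
  imports "HOL-Analysis.Analysis"
begin

definition nonexpansive :: "('a::real_normed_vector \<Rightarrow> 'a) \<Rightarrow> bool" where
  "nonexpansive N \<longleftrightarrow> (\<forall>x y. norm (N x - N y) \<le> norm (x - y))"

definition averaged_nonexpansive :: "('a::real_normed_vector \<Rightarrow> 'a) \<Rightarrow> bool" where
  "averaged_nonexpansive T \<longleftrightarrow>
     (\<exists>lam N. 0 \<le> lam \<and> lam < 1 \<and> nonexpansive N \<and>
        T = (\<lambda>x. (1 - lam) *\<^sub>R x + lam *\<^sub>R N x))"

definition Fix :: "('a \<Rightarrow> 'a) \<Rightarrow> 'a set" where
  "Fix T = {x. T x = x}"

definition boundedly_regular_op :: "('a::real_normed_vector \<Rightarrow> 'a) \<Rightarrow> bool" where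
  "boundedly_regular_op T \<longleftrightarrow> Fix T \<noteq> {} \<and>
     (\<forall>x :: nat \<Rightarrow> 'a. bounded (range x) \<longrightarrow> ((\<lambda>n. x n - T (x n)) \<longlonglongrightarrow> 0)
        \<longrightarrow> ((\<lambda>n. infdist (x n) (Fix T)) \<longlonglongrightarrow> 0))"

definition boundedly_regular_family :: "'i set \<Rightarrow> ('i \<Rightarrow> 'a::real_normed_vector set) \<Rightarrow> bool" where
  "boundedly_regular_family I C \<longleftrightarrow>
     finite I \<and> I \<noteq> {} \<and> (\<forall>i\<in>I. closed (C i) \<and> convex (C i)) \<and> (\<Inter>i\<in>I. C i) \<noteq> {} \<and>
     (\<forall>x :: nat \<Rightarrow> 'a. bounded (range x) \<longrightarrow>
        ((\<lambda>n. Max ((\<lambda>i. infdist (x n) (C i)) ` I)) \<longlonglongrightarrow> 0)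
        \<longrightarrow> ((\<lambda>n. infdist (x n) (\<Inter>i\<in>I. C i)) \<longlonglongrightarrow> 0))"

definition innately_boundedly_regular :: "'i set \<Rightarrow> ('i \<Rightarrow> 'a::real_normed_vector set) \<Rightarrow> bool" where
  "innately_boundedly_regular I C \<longleftrightarrow>
     (\<forall>J. J \<subseteq> I \<and> J \<noteq> {} \<longrightarrow> boundedly_regular_family J C)"

definition random_map :: "'i set \<Rightarrow> (nat \<Rightarrow> 'i) \<Rightarrow> bool" where
  "random_map I r \<longleftrightarrow> (\<forall>n. r n \<in> I) \<and> (\<forall>i\<in>I. infinite (r -` {i}))"

text \<open>Metric projection onto Z (well-defined for nonempty closed convex Z in a Hilbert space).\<close>
definition metric_proj :: "'a::real_normed_vector set \<Rightarrow> 'a \<Rightarrow> 'a" where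
  "metric_proj Z x = (THE p. p \<in> Z \<and> (\<forall>w\<in>Z. dist x p \<le> dist x w))"

end

theory Submission
  imports Defs
begin

lemma infdist_ge_lower:
  assumes "A \<noteq> {}" "\<And>a. a \<in> A \<Longrightarrow> e \<le> dist x a"
  shows "e \<le> infdist x A"
  unfolding infdist_notempty[OF assms(1)] by (rule cINF_greatest) (use assms in auto)

lemma infdist_lessE:
  assumes "A \<noteq> {}" "infdist x A < e"
  shows "\<exists>a\<in>A. dist x a < e"
  using infdist_ge_lower[OF assms(1), of e x] assms(2) by force

lemma infdist_decr:
  assumes "A \<noteq> {}" "\<And>a. a \<in> A \<Longrightarrow> dist y a \<le> dist x a"
  shows "infdist y A \<le> infdist x A"
proof (rule infdist_ge_lower[OF assms(1)])
  fix a assume "a \<in> A"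
  then show "infdist y A \<le> dist x a"
    using infdist_le[of a A y] assms(2)[of a] by linarith
qed

lemma avg_nonexp:
  assumes "averaged_nonexpansive T"
  shows "norm (T x - T y) \<le> norm (x - y)"
proof -
  obtain lam N where l: "0 \<le> lam" "lam < 1" "nonexpansive N"
    and T: "T = (\<lambda>x. (1 - lam) *\<^sub>R x + lam *\<^sub>R N x)"
    using assms unfolding averaged_nonexpansive_def by blast
  have mono: "lam * norm (N x - N y) \<le> lam * norm (x - y)"
  proof (rule mult_left_mono)
    show "norm (N x - N y) \<le> norm (x - y)" using l(3) unfolding nonexpansive_def by blast
  qed (use l(1) in simp)
  have "T x - T y = (1 - lam) *\<^sub>R (x - y) + lam *\<^sub>R (N x - N y)"
    by (simp add: T algebra_simps)
  also have "norm \<dots> \<le> norm ((1 - lam) *\<^sub>R (x - y)) + norm (lam *\<^sub>R (N x - N y))"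
    by (rule norm_triangle_ineq)
  also have "\<dots> = (1 - lam) * norm (x - y) + lam * norm (N x - N y)"
    using l(1,2) by simp
  also have "\<dots> \<le> (1 - lam) * norm (x - y) + lam * norm (x - y)"
    using mono by linarith
  finally show ?thesis by (simp add: algebra_simps)
qed

lemma avg_ineq:
  fixes T :: "'a::real_inner \<Rightarrow> 'a"
  assumes "averaged_nonexpansive T"
  shows "\<exists>c>0. \<forall>x w. T w = w \<longrightarrow> (norm (T x - w))^2 + c * (norm (x - T x))^2 \<le> (norm (x - w))^2"
proof -
  obtain lam N where l: "0 \<le> lam" "lam < 1" "nonexpansive N"
    and T: "T = (\<lambda>x. (1 - lam) *\<^sub>R x + lam *\<^sub>R N x)"
    using assms unfolding averaged_nonexpansive_def by blast
  show ?thesis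
  proof (cases "lam = 0")
    case True
    then show ?thesis by (intro exI[of _ 1]) (simp add: T)
  next
    case False
    then have lp: "lam > 0" using l by simp
    show ?thesis
    proof (intro exI[of _ "(1 - lam) / lam"] conjI allI impI)
      show "(1 - lam) / lam > 0" using l lp by simp
      fix x w assume "T w = w"
      then have "lam *\<^sub>R (N w - w) = 0" by (simp add: T algebra_simps)
      then have Nw: "N w = w" using lp by simp
      define a where "a = x - w"
      define b where "b = N x - w"
      have nb: "norm b \<le> norm a" using l(3) Nw unfolding nonexpansive_def a_def b_def by metis
      have e1: "T x - w = (1 - lam) *\<^sub>R a + lam *\<^sub>R b" by (simp add: T a_def b_def algebra_simps)
      have e2: "x - T x = lam *\<^sub>R (a - b)" by (simp add: T a_def b_def algebra_simps)
      have n1: "(norm (T x - w))^2 = (1-lam)^2 * (a \<bullet> a) + lam^2 * (b \<bullet> b) + 2*lam*(1-lam)*(a \<bullet> b)"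
        unfolding e1 power2_norm_eq_inner by (simp add: inner_add inner_commute algebra_simps power2_eq_square)
      have n2: "(norm (x - T x))^2 = lam^2 * (a \<bullet> a + b \<bullet> b - 2 * (a \<bullet> b))"
        unfolding e2 power2_norm_eq_inner by (simp add: inner_diff inner_commute algebra_simps power2_eq_square)
      have bb: "b \<bullet> b \<le> a \<bullet> a" using nb
        by (metis norm_ge_zero power2_norm_eq_inner power_mono)
      have "(norm (T x - w))^2 + (1 - lam) / lam * (norm (x - T x))^2 = (1 - lam) * (a \<bullet> a) + lam * (b \<bullet> b)"
        unfolding n1 n2 using lp by (simp add: field_simps power2_eq_square)
      also have "\<dots> \<le> (1 - lam) * (a \<bullet> a) + lam * (a \<bullet> a)" using bb l by (simp add: mult_left_mono)
      also have "\<dots> = (norm (x - w))^2" by (simp add: a_def power2_norm_eq_inner algebra_simps)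
      finally show "(norm (T x - w))^2 + (1 - lam) / lam * (norm (x - T x))^2 \<le> (norm (x - w))^2" .
    qed
  qed
qed

lemma reg_eps_delta:
  assumes R: "boundedly_regular_family J C" and B: "bounded B" and e: "e > 0"
  shows "\<exists>d>0. \<forall>y\<in>B. (\<forall>j\<in>J. infdist y (C j) < d) \<longrightarrow> infdist y (\<Inter>j\<in>J. C j) < e"
proof (rule ccontr)
  assume neg: "\<not> ?thesis"
  have "\<forall>k. \<exists>y. y \<in> B \<and> (\<forall>j\<in>J. infdist y (C j) < inverse (real (Suc k))) \<and> \<not> infdist y (\<Inter>j\<in>J. C j) < e"
  proof
    fix k :: nat
    have "inverse (real (Suc k)) > 0" by simp
    then have "\<not> (\<forall>y\<in>B. (\<forall>j\<in>J. infdist y (C j) < inverse (real (Suc k))) \<longrightarrow> infdist y (\<Inter>j\<in>J. C j) < e)"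
      using neg by auto
    then show "\<exists>y. y \<in> B \<and> (\<forall>j\<in>J. infdist y (C j) < inverse (real (Suc k))) \<and> \<not> infdist y (\<Inter>j\<in>J. C j) < e"
      by auto
  qed
  note ex = this
  from ex obtain y where y0: "\<forall>k. y k \<in> B \<and> (\<forall>j\<in>J. infdist (y k) (C j) < inverse (real (Suc k))) \<and> \<not> infdist (y k) (\<Inter>j\<in>J. C j) < e"
    using choice[OF ex] by (elim exE) (rule that, assumption)
  have y: "\<And>k. y k \<in> B" "\<And>k. \<forall>j\<in>J. infdist (y k) (C j) < inverse (real (Suc k))"
     "\<And>k. \<not> infdist (y k) (\<Inter>j\<in>J. C j) < e"
    using y0 by simp_all
  have fin: "finite J" "J \<noteq> {}" using R unfolding boundedly_regular_family_def by auto
  have bd: "bounded (range y)" using y(1) B by (meson bounded_subset image_subset_iff)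
  have ev: "\<forall>\<^sub>F n in sequentially. norm (Max ((\<lambda>i. infdist (y n) (C i)) ` J)) \<le> inverse (real (Suc n))"
  proof (rule always_eventually, rule allI)
    fix n
    obtain j where j: "j \<in> J" using fin by auto
    have "infdist (y n) (C j) \<le> Max ((\<lambda>i. infdist (y n) (C i)) ` J)"
      by (rule Max_ge) (use fin j in auto)
    then have ge: "0 \<le> Max ((\<lambda>i. infdist (y n) (C i)) ` J)"
      using infdist_nonneg[of "y n" "C j"] by linarith
    have "Max ((\<lambda>i. infdist (y n) (C i)) ` J) \<le> inverse (real (Suc n))"
      using fin y(2)[of n] by (subst Max_le_iff) auto
    then show "norm (Max ((\<lambda>i. infdist (y n) (C i)) ` J)) \<le> inverse (real (Suc n))"
      using ge by simp
  qed
  have "(\<lambda>n. Max ((\<lambda>i. infdist (y n) (C i)) ` J)) \<longlonglongrightarrow> 0"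
    by (rule Lim_null_comparison[OF ev LIMSEQ_inverse_real_of_nat])
  then have "(\<lambda>n. infdist (y n) (\<Inter>j\<in>J. C j)) \<longlonglongrightarrow> 0"
    using R[unfolded boundedly_regular_family_def, THEN conjunct2, THEN conjunct2, THEN conjunct2, THEN conjunct2, rule_format, OF bd] by blast
  then have "\<forall>\<^sub>F n in sequentially. infdist (y n) (\<Inter>j\<in>J. C j) < e"
    using e by (rule order_tendstoD(2))
  then obtain N where "\<forall>n\<ge>N. infdist (y n) (\<Inter>j\<in>J. C j) < e"
    by (auto simp: eventually_sequentially)
  then show False using y(3)[of N] by auto
qed

lemma affine_orth:
  fixes x y :: "'a::real_inner"
  assumes Z: "affine Z" and a: "a \<in> Z" and b: "b \<in> Z"
    and F: "\<And>w. w \<in> Z \<Longrightarrow> norm (y - w) \<le> norm (x - w)"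
  shows "inner (y - x) (a - b) = 0"
proof (rule ccontr)
  define d where "d = a - b"
  define u where "u = x - b"
  define v where "v = y - b"
  define k where "k = inner (u - v) d"
  define C where "C = inner u u - inner v v"
  assume "inner (y - x) (a - b) \<noteq> 0"
  then have k0: "k \<noteq> 0" by (simp add: k_def u_def v_def d_def inner_diff_left)
  have main: "2 * t * k \<le> C" for t
  proof -
    have w: "t *\<^sub>R a + (1 - t) *\<^sub>R b \<in> Z" using Z a b unfolding affine_def by auto
    have "norm (y - (t *\<^sub>R a + (1 - t) *\<^sub>R b)) \<le> norm (x - (t *\<^sub>R a + (1 - t) *\<^sub>R b))" by (rule F[OF w])
    moreover have "y - (t *\<^sub>R a + (1 - t) *\<^sub>R b) = v - t *\<^sub>R d" "x - (t *\<^sub>R a + (1 - t) *\<^sub>R b) = u - t *\<^sub>R d"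
      by (simp_all add: v_def u_def d_def algebra_simps)
    ultimately have "norm (v - t *\<^sub>R d) ^ 2 \<le> norm (u - t *\<^sub>R d) ^ 2"
      by (simp add: power_mono)
    then have "inner (v - t *\<^sub>R d) (v - t *\<^sub>R d) \<le> inner (u - t *\<^sub>R d) (u - t *\<^sub>R d)"
      by (simp add: power2_norm_eq_inner)
    then show ?thesis
      by (simp add: k_def C_def inner_diff_left inner_diff_right inner_commute algebra_simps)
  qed
  have "2 * ((\<bar>C\<bar> + 1) / (2 * k)) * k \<le> C" by (rule main)
  moreover have "2 * ((\<bar>C\<bar> + 1) / (2 * k)) * k = \<bar>C\<bar> + 1" using k0 by (simp add: field_simps)
  ultimately show False by linarith
qed

lemma proj_char:
  fixes x0 z :: "'a::real_inner"
  assumes z: "z \<in> Z" and O: "\<And>a b. a \<in> Z \<Longrightarrow> b \<in> Z \<Longrightarrow> inner (x0 - z) (a - b) = 0"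
  shows "metric_proj Z x0 = z"
proof -
  have pyth: "(dist x0 w)^2 = (dist x0 z)^2 + (norm (z - w))^2" if w: "w \<in> Z" for w
  proof -
    have e: "x0 - w = (x0 - z) + (z - w)" by simp
    have "(dist x0 w)^2 = inner ((x0 - z) + (z - w)) ((x0 - z) + (z - w))"
      unfolding dist_norm power2_norm_eq_inner e[symmetric] by simp
    also have "\<dots> = inner (x0 - z) (x0 - z) + inner (z - w) (z - w) + 2 * inner (x0 - z) (z - w)"
      by (simp only: inner_add_left inner_add_right) (simp add: inner_commute)
    also have "inner (x0 - z) (z - w) = 0" using O[OF z w] .
    finally show ?thesis by (simp add: dist_norm power2_norm_eq_inner)
  qed
  show ?thesis unfolding metric_proj_def
  proof (rule the_equality)
    show "z \<in> Z \<and> (\<forall>w\<in>Z. dist x0 z \<le> dist x0 w)"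
    proof (intro conjI ballI z)
      fix w assume w: "w \<in> Z"
      have "(dist x0 z)^2 \<le> (dist x0 w)^2" using pyth[OF w] zero_le_power2[of "norm (z - w)"] by linarith
      then show "dist x0 z \<le> dist x0 w" by (rule power2_le_imp_le) simp
    qed
  next
    fix p assume p: "p \<in> Z \<and> (\<forall>w\<in>Z. dist x0 p \<le> dist x0 w)"
    then have "dist x0 p \<le> dist x0 z" using z by blast
    then have "(dist x0 p)^2 \<le> (dist x0 z)^2" by (rule power_mono) simp
    then have "(norm (z - p))^2 \<le> 0" using pyth[of p] p by linarith
    then show "p = z" by simp
  qed
qed

lemma nonexp_continuous:
  assumes "\<And>y w. norm (f y - f w) \<le> norm (y - (w::'a::real_normed_vector))"
  shows "continuous_on UNIV f"
  unfolding continuous_on_iff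
proof (intro ballI allI impI)
  fix y e assume "(e::real) > 0"
  then show "\<exists>d>0. \<forall>x'\<in>UNIV. dist x' y < d \<longrightarrow> dist (f x') (f y) < e"
    using assms by (intro exI[of _ e]) (auto simp: dist_norm intro: le_less_trans)
qed

theorem theorem7p2:
  fixes T :: "'i \<Rightarrow> 'a::{real_inner, complete_space} \<Rightarrow> 'a"
    and I :: "'i set" and r :: "nat \<Rightarrow> 'i" and x0 :: 'a
  assumes "finite I"
    and "\<And>i. i \<in> I \<Longrightarrow> averaged_nonexpansive (T i)"
    and "\<And>i. i \<in> I \<Longrightarrow> boundedly_regular_op (T i)"
    and "(\<Inter>i\<in>I. Fix (T i)) \<noteq> {}"
    and "innately_boundedly_regular I (\<lambda>i. Fix (T i))"
    and "random_map I r"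
  defines "x \<equiv> rec_nat x0 (\<lambda>n xn. T (r n) xn)"
  shows "\<exists>z \<in> (\<Inter>i\<in>I. Fix (T i)). x \<longlonglongrightarrow> z \<and>
           (affine (\<Inter>i\<in>I. Fix (T i)) \<longrightarrow> z = metric_proj (\<Inter>i\<in>I. Fix (T i)) x0)"
proof -
  define Z where "Z = (\<lambda>i. Fix (T i))"
  define ZJ where "ZJ = (\<lambda>J. \<Inter>j\<in>J. Z j)"
  have ZI: "(\<Inter>i\<in>I. Fix (T i)) = ZJ I" by (simp add: ZJ_def Z_def)
  have innZ: "innately_boundedly_regular I Z" using assms(5) by (simp add: Z_def)
  have x0[simp]: "x 0 = x0" and xS[simp]: "\<And>n. x (Suc n) = T (r n) (x n)" by (simp_all add: x_def)
  have rI: "\<And>n. r n \<in> I" and rinf: "\<And>i. i \<in> I \<Longrightarrow> infinite (r -` {i})"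
    using assms(6) unfolding random_map_def by auto
  have memZJ: "\<And>w J. w \<in> ZJ J \<longleftrightarrow> (\<forall>j\<in>J. w \<in> Z j)" by (simp add: ZJ_def)
  have ZIne: "ZJ I \<noteq> {}" using assms(4) ZI by simp
  have ZJsub: "\<And>J. J \<subseteq> I \<Longrightarrow> ZJ I \<subseteq> ZJ J" using memZJ by blast
  have ZJne: "\<And>J. J \<subseteq> I \<Longrightarrow> ZJ J \<noteq> {}" using ZJsub ZIne by blast
  have nonexp: "\<And>i y w. i \<in> I \<Longrightarrow> norm (T i y - T i w) \<le> norm (y - w)"
    using avg_nonexp assms(2) by blast
  have fixZ: "\<And>i w. w \<in> Z i \<Longrightarrow> T i w = w" by (simp add: Z_def Fix_def)
  have step_fejer: "\<And>n w J. r n \<in> J \<Longrightarrow> w \<in> ZJ J \<Longrightarrow> norm (x (Suc n) - w) \<le> norm (x n - w)"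
  proof -
    fix n :: nat and w J assume rn: "r n \<in> J" and w: "w \<in> ZJ J"
    then have "T (r n) w = w" using memZJ fixZ by blast
    then show "norm (x (Suc n) - w) \<le> norm (x n - w)"
      using nonexp[OF rI[of n], of "x n" w] by simp
  qed
  have fejer: "\<And>n m w. n \<le> m \<Longrightarrow> w \<in> ZJ I \<Longrightarrow> norm (x m - w) \<le> norm (x n - w)"
  proof -
    fix n m :: nat and w assume nm: "n \<le> m" and w: "w \<in> ZJ I"
    from nm show "norm (x m - w) \<le> norm (x n - w)"
    proof (induction m rule: dec_induct)
      case base then show ?case by simp
    next
      case (step m)
      then show ?case using step_fejer[OF rI[of m] w] by linarith
    qed
  qed
  have dmono: "\<And>J n m. J \<subseteq> I \<Longrightarrow> n \<le> m \<Longrightarrow> (\<forall>t. n \<le> t \<and> t < m \<longrightarrow> r t \<in> J) \<Longrightarrow>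
      infdist (x m) (ZJ J) \<le> infdist (x n) (ZJ J)"
  proof -
    fix J and n m :: nat assume J: "J \<subseteq> I" and nm: "n \<le> m" and rt: "\<forall>t. n \<le> t \<and> t < m \<longrightarrow> r t \<in> J"
    from nm rt show "infdist (x m) (ZJ J) \<le> infdist (x n) (ZJ J)"
    proof (induction m rule: dec_induct)
      case base then show ?case by simp
    next
      case (step m)
      have "r m \<in> J" using step by auto
      then have "infdist (x (Suc m)) (ZJ J) \<le> infdist (x m) (ZJ J)"
      proof (intro infdist_decr[OF ZJne[OF J]])
        fix a assume a: "a \<in> ZJ J"
        show "dist (x (Suc m)) a \<le> dist (x m) a"
          using step_fejer[OF \<open>r m \<in> J\<close> a] by (simp only: dist_norm)
      qed
      moreover have "infdist (x m) (ZJ J) \<le> infdist (x n) (ZJ J)" using step by auto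
      ultimately show ?case by linarith
    qed
  qed
  obtain p where p: "p \<in> ZJ I" using ZIne by blast
  define R where "R = norm (x0 - p)"
  have bnd: "\<And>n. x n \<in> cball p R"
    using fejer[of 0 _ p] p by (simp add: R_def dist_norm norm_minus_commute[of p])
  have B: "bounded (cball p R)" by simp
  have pfix: "\<And>i. i \<in> I \<Longrightarrow> T i p = p" using p memZJ fixZ by blast
  have stepreg: "\<And>\<delta>. \<delta> > 0 \<Longrightarrow> eventually (\<lambda>n. infdist (x n) (Z (r n)) < \<delta>) sequentially"
  proof -
    fix \<delta> :: real assume dpos: "\<delta> > 0"
    have "\<forall>i\<in>I. eventually (\<lambda>n. r n = i \<longrightarrow> infdist (x n) (Z i) < \<delta>) sequentially"
    proof
      fix i assume i: "i \<in> I"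
      obtain c where c: "c > 0" "\<forall>y w. T i w = w \<longrightarrow> (norm (T i y - w))^2 + c * (norm (y - T i y))^2 \<le> (norm (y - w))^2"
        using avg_ineq[OF assms(2)[OF i]] by blast
      define a where "a = (\<lambda>n. (norm (x n - p))^2)"
      have adec: "a (Suc n) \<le> a n" for n
        unfolding a_def using step_fejer[OF rI[of n] p] by (simp add: power_mono)
      have dec: "decseq a" using adec by (simp add: decseq_Suc_iff)
      have a0: "\<forall>n. 0 \<le> a n" by (simp add: a_def)
      obtain L where L: "a \<longlonglongrightarrow> L" using decseq_convergent[OF dec a0] by blast
      have "(\<lambda>n. sqrt ((a n - a (Suc n)) / c)) \<longlonglongrightarrow> sqrt ((L - L) / c)"
        using c(1) by (intro tendsto_intros L LIMSEQ_Suc[OF L]) simp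
      then have diff: "(\<lambda>n. sqrt ((a n - a (Suc n)) / c)) \<longlonglongrightarrow> 0" by simp
      define yy where "yy = (\<lambda>n. if r n = i then x n else p)"
      have "(\<lambda>n. yy n - T i (yy n)) \<longlonglongrightarrow> 0"
      proof (rule Lim_null_comparison[OF always_eventually diff], rule allI)
        fix n
        have nn: "0 \<le> (a n - a (Suc n)) / c" using adec[of n] c(1) by simp
        show "norm (yy n - T i (yy n)) \<le> sqrt ((a n - a (Suc n)) / c)"
        proof (cases "r n = i")
          case True
          have "(norm (T i (x n) - p))^2 + c * (norm (x n - T i (x n)))^2 \<le> (norm (x n - p))^2"
            using c(2) pfix[OF i] by blast
          then have "c * (norm (x n - T i (x n)))^2 \<le> a n - a (Suc n)"
            using True by (simp add: a_def)
          then have "(norm (x n - T i (x n)))^2 \<le> (a n - a (Suc n)) / c"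
            using c(1) by (simp add: field_simps)
          then have "norm (x n - T i (x n)) \<le> sqrt ((a n - a (Suc n)) / c)"
            by (simp add: real_le_rsqrt)
          then show ?thesis using True by (simp add: yy_def)
        next
          case False
          then show ?thesis using nn pfix[OF i] by (simp add: yy_def)
        qed
      qed
      moreover have "bounded (range yy)"
        by (rule bounded_subset[OF B]) (use bnd p in \<open>auto simp: yy_def R_def\<close>)
      ultimately have "(\<lambda>n. infdist (yy n) (Fix (T i))) \<longlonglongrightarrow> 0"
        using assms(3)[OF i] unfolding boundedly_regular_op_def by blast
      then have "eventually (\<lambda>n. infdist (yy n) (Fix (T i)) < \<delta>) sequentially"
        using dpos by (rule order_tendstoD(2))
      then show "eventually (\<lambda>n. r n = i \<longrightarrow> infdist (x n) (Z i) < \<delta>) sequentially"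
        by (rule eventually_mono) (auto simp: yy_def Z_def)
    qed
    then have "eventually (\<lambda>n. \<forall>i\<in>I. r n = i \<longrightarrow> infdist (x n) (Z i) < \<delta>) sequentially"
      by (rule eventually_ball_finite[OF assms(1)])
    then show "eventually (\<lambda>n. infdist (x n) (Z (r n)) < \<delta>) sequentially"
      by (rule eventually_mono) (use rI in auto)
  qed
  define cond where "cond = (\<lambda>J n m. n \<le> m \<and> (\<forall>t. n \<le> t \<and> t < m \<longrightarrow> r t \<in> J) \<and>
      (\<forall>j\<in>J. \<exists>t. n \<le> t \<and> t < m \<and> r t = j))"
  have claim: "\<And>J \<epsilon>. J \<subseteq> I \<Longrightarrow> J \<noteq> {} \<Longrightarrow> card J \<le> k \<Longrightarrow> \<epsilon> > 0 \<Longrightarrow>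
      eventually (\<lambda>n. \<forall>m. cond J n m \<longrightarrow> infdist (x m) (ZJ J) < \<epsilon>) sequentially" for k
  proof (induction k)
    case 0
    then show ?case using finite_subset[OF _ assms(1)] by (meson card_0_eq le_zero_eq)
  next
    case (Suc k)
    fix J \<epsilon> assume J: "J \<subseteq> I" and Jne: "J \<noteq> {}" and cJ: "card J \<le> Suc k" and e: "(\<epsilon>::real) > 0"
    have finJ: "finite J" using J assms(1) finite_subset by blast
    have brf: "boundedly_regular_family J Z" using innZ J Jne unfolding innately_boundedly_regular_def by blast
    obtain \<delta> where d: "\<delta> > 0" "\<forall>y\<in>cball p R. (\<forall>j\<in>J. infdist y (Z j) < \<delta>) \<longrightarrow> infdist y (ZJ J) < \<epsilon>"
      using reg_eps_delta[OF brf B e] unfolding ZJ_def by blast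
    define S where "S = {J'. J' \<subseteq> J \<and> J' \<noteq> {} \<and> J' \<noteq> J}"
    have finS: "finite S" unfolding S_def using finJ by simp
    have "\<forall>J'\<in>S. eventually (\<lambda>n. \<forall>m. cond J' n m \<longrightarrow> infdist (x m) (ZJ J') < \<delta>) sequentially"
    proof
      fix J' assume "J' \<in> S"
      then have J': "J' \<subseteq> J" "J' \<noteq> {}" "J' \<noteq> J" unfolding S_def by auto
      have "card J' < card J" using J' finJ by (meson psubsetI psubset_card_mono)
      then show "eventually (\<lambda>n. \<forall>m. cond J' n m \<longrightarrow> infdist (x m) (ZJ J') < \<delta>) sequentially"
        using Suc.IH[of J' \<delta>] J' J cJ d(1) by simp
    qed
    then have E1: "eventually (\<lambda>n. \<forall>J'\<in>S. \<forall>m. cond J' n m \<longrightarrow> infdist (x m) (ZJ J') < \<delta>) sequentially"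
      by (rule eventually_ball_finite[OF finS])
    have E2: "eventually (\<lambda>n. \<forall>q\<ge>n. infdist (x q) (Z (r q)) < \<delta>) sequentially"
      using eventually_all_ge_at_top[OF stepreg[OF d(1)]] by simp
    show "eventually (\<lambda>n. \<forall>m. cond J n m \<longrightarrow> infdist (x m) (ZJ J) < \<epsilon>) sequentially"
      using eventually_conj[OF E1 E2]
    proof (rule eventually_mono, intro allI impI)
      fix n m
      assume H: "(\<forall>J'\<in>S. \<forall>m. cond J' n m \<longrightarrow> infdist (x m) (ZJ J') < \<delta>) \<and> (\<forall>q\<ge>n. infdist (x q) (Z (r q)) < \<delta>)"
        and cnd: "cond J n m"
      define P where "P = (\<lambda>q. \<forall>j\<in>J. \<exists>t. n \<le> t \<and> t \<le> q \<and> r t = j)"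
      have Pm: "P (m - 1)" using cnd unfolding cond_def P_def
        by (metis Suc_pred' less_Suc_eq_le not_less_zero zero_less_iff_neq_zero le0 less_le_trans)
      define q where "q = (LEAST q. P q)"
      have Pq: "P q" unfolding q_def by (rule LeastI[of P, OF Pm])
      have qm1: "q \<le> m - 1" unfolding q_def by (rule Least_le[of P, OF Pm])
      obtain j0 where j0: "j0 \<in> J" using Jne by blast
      obtain t0 where t0: "n \<le> t0" "t0 < m" using cnd j0 unfolding cond_def by blast
      have qm: "q < m" using qm1 t0 by linarith
      obtain t1 where "n \<le> t1" "t1 \<le> q" using Pq j0 unfolding P_def by blast
      then have nq: "n \<le> q" by linarith
      have rqJ: "r q \<in> J" using cnd nq qm unfolding cond_def by blast
      have notbefore: "r t \<noteq> r q" if t: "n \<le> t" "t < q" for t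
      proof
        assume eq: "r t = r q"
        have "P (q - 1)" unfolding P_def
        proof
          fix j assume "j \<in> J"
          then obtain tj where tj: "n \<le> tj" "tj \<le> q" "r tj = j" using Pq unfolding P_def by blast
          show "\<exists>t. n \<le> t \<and> t \<le> q - 1 \<and> r t = j"
          proof (cases "tj = q")
            case True then show ?thesis using t eq tj by (intro exI[of _ t]) auto
          next
            case False then show ?thesis using tj by (intro exI[of _ tj]) auto
          qed
        qed
        then have "q \<le> q - 1" unfolding q_def by (rule Least_le)
        then show False using t by linarith
      qed
      have small: "\<forall>j\<in>J. infdist (x q) (Z j) < \<delta>"
      proof
        fix j assume jJ: "j \<in> J"
        show "infdist (x q) (Z j) < \<delta>"
        proof (cases "j = r q")
          case True then show ?thesis using H nq by blast
        next
          case False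
          define J' where "J' = J - {r q}"
          have J'S: "J' \<in> S" unfolding S_def J'_def using jJ False rqJ by auto
          have "cond J' n q" unfolding cond_def
          proof (intro conjI allI impI ballI)
            show "n \<le> q" by (rule nq)
          next
            fix t assume "n \<le> t \<and> t < q"
            then show "r t \<in> J'" using cnd qm notbefore unfolding cond_def J'_def by auto
          next
            fix j' assume j': "j' \<in> J'"
            then obtain t where t: "n \<le> t" "t \<le> q" "r t = j'" using Pq unfolding P_def J'_def by blast
            have "t \<noteq> q" using t j' unfolding J'_def by auto
            then show "\<exists>t. n \<le> t \<and> t < q \<and> r t = j'" using t by (intro exI[of _ t]) auto
          qed
          then have "infdist (x q) (ZJ J') < \<delta>" using H J'S by blast
          moreover have "infdist (x q) (Z j) \<le> infdist (x q) (ZJ J')"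
          proof (rule infdist_mono)
            show "ZJ J' \<subseteq> Z j" using jJ False unfolding ZJ_def J'_def by auto
            show "ZJ J' \<noteq> {}" using ZJne J J'S unfolding S_def by blast
          qed
          ultimately show ?thesis by linarith
        qed
      qed
      then have "infdist (x q) (ZJ J) < \<epsilon>" using d(2) bnd by blast
      moreover have "infdist (x m) (ZJ J) \<le> infdist (x q) (ZJ J)"
        using dmono[OF J, of q m] cnd qm nq unfolding cond_def by auto
      ultimately show "infdist (x m) (ZJ J) < \<epsilon>" by linarith
    qed
  qed
  have Ine: "I \<noteq> {}" using rI by blast
  have small: "\<exists>m. \<forall>k\<ge>m. infdist (x k) (ZJ I) < \<epsilon>" if e: "\<epsilon> > 0" for \<epsilon>
  proof -
    obtain N where N: "\<And>n m. n \<ge> N \<Longrightarrow> cond I n m \<Longrightarrow> infdist (x m) (ZJ I) < \<epsilon>"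
      using claim[of I "card I" \<epsilon>] Ine e unfolding eventually_sequentially by blast
    have "\<forall>i\<in>I. \<exists>t. N \<le> t \<and> r t = i"
      using rinf unfolding infinite_nat_iff_unbounded_le by blast
    then obtain tt where tt: "\<And>i. i \<in> I \<Longrightarrow> N \<le> tt i \<and> r (tt i) = i" by metis
    define m where "m = Suc (Max (tt ` I))"
    have "cond I N m" unfolding cond_def
    proof (intro conjI allI impI ballI)
      show "N \<le> m" using tt Ine assms(1) unfolding m_def
        by (meson Max_ge all_not_in_conv finite_imageI image_eqI le_SucI order_trans)
    next
      fix t show "r t \<in> I" by (rule rI)
    next
      fix j assume j: "j \<in> I"
      have "tt j \<le> Max (tt ` I)" using j assms(1) by simp
      then show "\<exists>t. N \<le> t \<and> t < m \<and> r t = j" using tt[OF j] unfolding m_def by (intro exI[of _ "tt j"]) auto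
    qed
    then have hm: "infdist (x m) (ZJ I) < \<epsilon>" using N by blast
    show ?thesis
    proof (intro exI allI impI)
      fix k assume "m \<le> k"
      then have "infdist (x k) (ZJ I) \<le> infdist (x m) (ZJ I)" using dmono[of I m k] rI by blast
      then show "infdist (x k) (ZJ I) < \<epsilon>" using hm by linarith
    qed
  qed
  have dlim: "(\<lambda>n. infdist (x n) (ZJ I)) \<longlonglongrightarrow> 0"
    unfolding LIMSEQ_iff using small by (simp add: infdist_nonneg)
  have "Cauchy x"
  proof (rule CauchyI)
    fix e :: real assume e: "e > 0"
    then obtain M where M: "\<And>k. k \<ge> M \<Longrightarrow> infdist (x k) (ZJ I) < e / 2" using small[of "e/2"] by auto
    obtain w where w: "w \<in> ZJ I" "dist (x M) w < e / 2" using infdist_lessE[OF ZIne M[of M]] by auto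
    have "\<forall>m\<ge>M. \<forall>n\<ge>M. norm (x m - x n) < e"
    proof (intro allI impI)
      fix m n assume "m \<ge> M" "n \<ge> M"
      then have "norm (x m - w) \<le> norm (x M - w)" "norm (x n - w) \<le> norm (x M - w)"
        using fejer[of M _ w] w(1) by auto
      moreover have "norm (x M - w) < e/2" using w(2) by (simp add: dist_norm)
      moreover have "norm (x m - x n) \<le> norm (x m - w) + norm (x n - w)"
        by (metis norm_diff_triangle_ineq norm_minus_commute diff_diff_eq2 add_diff_cancel_left' norm_triangle_sub)
      ultimately show "norm (x m - x n) < e" by linarith
    qed
    then show "\<exists>M. \<forall>m\<ge>M. \<forall>n\<ge>M. norm (x m - x n) < e" by blast
  qed
  then obtain z where xz: "x \<longlonglongrightarrow> z" unfolding Cauchy_convergent_iff convergent_def by blast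
  have clZ: "closed (ZJ I)" unfolding ZJ_def Z_def Fix_def
  proof (intro closed_INT ballI)
    fix i assume i: "i \<in> I"
    have "continuous_on UNIV (T i)" by (rule nonexp_continuous) (rule nonexp[OF i])
    then show "closed {y. T i y = y}"
      using closed_Collect_eq[of "T i" "\<lambda>y. y"] by (simp add: continuous_on_id)
  qed
  have "(\<lambda>n. infdist (x n) (ZJ I)) \<longlonglongrightarrow> infdist z (ZJ I)" by (rule tendsto_infdist[OF xz])
  then have "infdist z (ZJ I) = 0" using dlim LIMSEQ_unique by blast
  then have zZ: "z \<in> ZJ I" using in_closed_iff_infdist_zero[OF clZ ZIne] by blast
  have aff: "z = metric_proj (ZJ I) x0" if affZ: "affine (ZJ I)"
  proof -
    have orth: "inner (x n - x0) (a - b) = 0" if a: "a \<in> ZJ I" and b: "b \<in> ZJ I" for n a b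
    proof (induction n)
      case 0 then show ?case by simp
    next
      case (Suc n)
      have "inner (x (Suc n) - x n) (a - b) = 0"
        by (rule affine_orth[OF affZ a b]) (rule step_fejer[OF rI])
      moreover have "x (Suc n) - x0 = (x (Suc n) - x n) + (x n - x0)" by simp
      ultimately show ?case using Suc.IH by (simp only: inner_add_left)
    qed
    show ?thesis
    proof (rule proj_char[OF zZ, symmetric])
      fix a b assume a: "a \<in> ZJ I" and b: "b \<in> ZJ I"
      have "(\<lambda>n. inner (x n - x0) (a - b)) \<longlonglongrightarrow> inner (z - x0) (a - b)"
        by (intro tendsto_intros xz)
      moreover have "(\<lambda>n. inner (x n - x0) (a - b)) = (\<lambda>n. 0)" using orth[OF a b] by simp
      ultimately have "inner (z - x0) (a - b) = 0" using LIMSEQ_unique tendsto_const by metis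
      then show "inner (x0 - z) (a - b) = 0" by (metis inner_minus_left minus_diff_eq neg_equal_0_iff_equal)
    qed
  qed
  show ?thesis unfolding ZI using zZ xz aff by blast
qed

end
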